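(* Let $f$ be a non-imposing ABC voting rule that satisfies anonymity, neutrality, consistency, continuity, choice set convexity, and weak efficiency. Then for every candidate $x\in\mathcal C$ and every ballot size $r\in\{1,\dots,m\}$ the following holds: if there is a ballot $S\in\mathcal A$ with $|S|=r$ such that $f(S)\neq\mathcal W_k$ (where $f(S)$ is the outcome on the one-voter profile with ballot $S$), then $f(A^{x,r})=\{W\in\mathcal W_k:x\in W\}$ and $f(A^{-x,r})=\{W\in\mathcal W_k:x\notin W\}$.
   Context: Let $\mathcal C=\{c_1,\dots,c_m\}$ be a set of $m\ge 2$ candidates and $\mathbb N=\{1,2,\dots\}$ the set of potential voters. An approval ballot is a non-empty subset of $\mathcal C$; $\mathcal A$ is the set of all ballots. A profile is a map $A:N_A\to\mathcal A$ for a non-empty finite electorate $N_A\subseteq\mathbb N$; $\mathcal A^*$ is the set of profiles. For disjoint electorates $A+A'$ is the union profile, and $\lambda A$ consists of $\lambda$ copies of $A$ on disjoint voter sets. Fix $k\in\{1,\dots,m-1\}$; $\mathcal W_k$ is the set of $k$-element subsets of $\mathcal C$. An ABC voting rule is a map $f:\mathcal A^*\to2^{\mathcal W_k}\setminus\{\emptyset\}$. Anonymity: invariance under renaming voters. Neutrality: $f(\tau(A))=\{\tau(W):W\in f(A)\}$ for every permutation $\tau$ of $\mathcal C$ ($\tau(A)_i=\tau(A_i)$). Consistency: $f(A+A')=f(A)\cap f(A')$ for disjoint $A,A'$ with non-empty intersection of outcomes. Continuity: for all $A,A'$ there is $\lambda\in\mathbb N$ with $f(\lambda A+A')\subseteq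 f(A)$. Weak efficiency: if $W\in f(A)$ and $c\in W$ is approved by no voter of $A$, then $(W\cup\{c'\})\setminus\{c\}\in f(A)$ for all $c'\notin W$. Choice set convexity: $W,W'\in f(A)$ implies $W''\in f(A)$ for all $W''\in\mathcal W_k$ with $W\cap W'\subseteq W''\subseteq W\cup W'$. Non-imposing: for every $W\in\mathcal W_k$ there is a profile $A$ with $f(A)=\{W\}$. For $x\in\mathcal C$ and $r\in\{1,\dots,m\}$, $A^{x,r}$ is the profile in which every ballot $S\in\mathcal A$ with $|S|=r$ and $x\in S$ is reported by exactly one voter (and no other ballots appear), and $A^{-x,r}$ is the profile in which every ballot $S$ with $|S|=r$ and $x\notin S$ is reported by exactly one voter. *)

theory Defs
  imports Main
begin

text \<open>Candidates are the elements of a finite type 'a (m = CARD('a)). A profile is a finite partial map from voters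
to ballots (non-empty sets of candidates); its electorate is its domain.\<close>

type_synonym 'a profile = "nat \<Rightarrow> 'a set option"

definition is_ballot :: "'a set \<Rightarrow> bool" where
  "is_ballot S \<longleftrightarrow> S \<noteq> {}"

definition is_profile :: "'a profile \<Rightarrow> bool" where
  "is_profile A \<longleftrightarrow> finite (dom A) \<and> dom A \<noteq> {} \<and> 0 \<notin> dom A
     \<and> (\<forall>S\<in>ran A. is_ballot S)"

definition committees :: "nat \<Rightarrow> 'a set set" where
  "committees k = {W. card W = k}"

definition is_abc_rule :: "nat \<Rightarrow> ('a profile \<Rightarrow> 'a set set) \<Rightarrow> bool" where
  "is_abc_rule k f \<longleftrightarrow> (\<forall>A. is_profile A \<longrightarrow> f A \<noteq> {} \<and> f A \<subseteq> committees k)"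

definition anonymous :: "('a profile \<Rightarrow> 'a set set) \<Rightarrow> bool" where
  "anonymous f \<longleftrightarrow> (\<forall>A A' \<pi>. is_profile A \<and> is_profile A' \<and> bij_betw \<pi> (dom A') (dom A)
      \<and> (\<forall>i\<in>dom A'. A' i = A (\<pi> i)) \<longrightarrow> f A' = f A)"

definition neutral :: "('a profile \<Rightarrow> 'a set set) \<Rightarrow> bool" where
  "neutral f \<longleftrightarrow> (\<forall>A \<tau>. is_profile A \<and> bij \<tau> \<longrightarrow>
      f (\<lambda>i. map_option (image \<tau>) (A i)) = image \<tau> ` f A)"

definition consistent :: "('a profile \<Rightarrow> 'a set set) \<Rightarrow> bool" where
  "consistent f \<longleftrightarrow> (\<forall>A A'. is_profile A \<and> is_profile A' \<and> dom A \<inter> dom A' = {}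
      \<and> f A \<inter> f A' \<noteq> {} \<longrightarrow> f (A ++ A') = f A \<inter> f A')"

text \<open>B consists of lam copies of A on pairwise disjoint voter sets.\<close>
definition copies :: "nat \<Rightarrow> 'a profile \<Rightarrow> 'a profile \<Rightarrow> bool" where
  "copies lam A B \<longleftrightarrow> (\<exists>N \<pi>. (\<forall>j<lam. bij_betw (\<pi> j) (N j) (dom A))
      \<and> (\<forall>j<lam. \<forall>j'<lam. j \<noteq> j' \<longrightarrow> N j \<inter> N j' = {})
      \<and> dom B = (\<Union>j<lam. N j)
      \<and> (\<forall>j<lam. \<forall>i\<in>N j. B i = A (\<pi> j i)))"

definition continuous_rule :: "('a profile \<Rightarrow> 'a set set) \<Rightarrow> bool" where
  "continuous_rule f \<longleftrightarrow> (\<forall>A A'. is_profile A \<and> is_profile A' \<longrightarrow>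
      (\<exists>lam\<ge>1. \<forall>B. is_profile B \<and> copies lam A B \<and> dom B \<inter> dom A' = {}
          \<longrightarrow> f (B ++ A') \<subseteq> f A))"

definition weakly_efficient :: "('a profile \<Rightarrow> 'a set set) \<Rightarrow> bool" where
  "weakly_efficient f \<longleftrightarrow> (\<forall>A W c. is_profile A \<and> W \<in> f A \<and> c \<in> W
      \<and> (\<forall>S\<in>ran A. c \<notin> S) \<longrightarrow> (\<forall>c'. c' \<notin> W \<longrightarrow> insert c' (W - {c}) \<in> f A))"

definition choice_set_convex :: "nat \<Rightarrow> ('a profile \<Rightarrow> 'a set set) \<Rightarrow> bool" where
  "choice_set_convex k f \<longleftrightarrow> (\<forall>A W W' W''. is_profile A \<and> W \<in> f A \<and> W' \<in> f A
      \<and> W'' \<in> committees k \<and> W \<inter> W' \<subseteq> W'' \<and> W'' \<subseteq> W \<union> W' \<longrightarrow> W'' \<in> f A)"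

definition non_imposing :: "nat \<Rightarrow> ('a profile \<Rightarrow> 'a set set) \<Rightarrow> bool" where
  "non_imposing k f \<longleftrightarrow> (\<forall>W\<in>committees k. \<exists>A. is_profile A \<and> f A = {W})"

definition single :: "'a set \<Rightarrow> 'a profile" where
  "single S = [1 \<mapsto> S]"

definition each_once :: "'a set set \<Rightarrow> 'a profile \<Rightarrow> bool" where
  "each_once X A \<longleftrightarrow> ran A \<subseteq> X \<and> (\<forall>S\<in>X. card {i\<in>dom A. A i = Some S} = 1)"

definition ballots_with :: "'a \<Rightarrow> nat \<Rightarrow> 'a set set" where
  "ballots_with x r = {S. is_ballot S \<and> card S = r \<and> x \<in> S}"

definition ballots_without :: "'a \<Rightarrow> nat \<Rightarrow> 'a set set" where
  "ballots_without x r = {S. is_ballot S \<and> card S = r \<and> x \<notin> S}"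

end

theory Submission
  imports Defs
begin


definition en :: "'a set set \<Rightarrow> nat \<Rightarrow> 'a set" where
  "en X = (SOME h. bij_betw h {0..<card X} X)"

lemma en_bij: "finite X \<Longrightarrow> bij_betw (en X) {0..<card X} X"
  unfolding en_def using ex_bij_betw_nat_finite[of X] by (metis someI_ex)

definition realize :: "nat \<Rightarrow> 'a set set \<Rightarrow> 'a profile" where
  "realize off X = (\<lambda>i. if off < i \<and> i \<le> off + card X then Some (en X (i - off - 1)) else None)"

lemma realize_dom: "dom (realize off X) = {off<..off + card X}"
  unfolding realize_def dom_def by auto

lemma realize_ran: assumes "finite X" shows "ran (realize off X) = X"
proof
  show "ran (realize off X) \<subseteq> X"
    using en_bij[OF assms] unfolding realize_def ran_def bij_betw_def
    by (auto split: if_splits)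
next
  show "X \<subseteq> ran (realize off X)"
  proof
    fix S assume "S \<in> X"
    then obtain j where j: "j < card X" "en X j = S"
      using en_bij[OF assms] unfolding bij_betw_def by (metis atLeastLessThan_iff imageE)
    then have "realize off X (off + 1 + j) = Some S" unfolding realize_def by auto
    then show "S \<in> ran (realize off X)" unfolding ran_def by blast
  qed
qed

lemma realize_each_once: assumes "finite X" shows "each_once X (realize off X)"
  unfolding each_once_def
proof (intro conjI ballI)
  show "ran (realize off X) \<subseteq> X" using realize_ran[OF assms] by simp
  fix S assume "S \<in> X"
  then obtain j where j: "j < card X" "en X j = S"
    using en_bij[OF assms] unfolding bij_betw_def by (metis atLeastLessThan_iff imageE)
  have "{i \<in> dom (realize off X). realize off X i = Some S} = {off + 1 + j}"
  proof (rule set_eqI, rule iffI)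
    fix i assume "i \<in> {i \<in> dom (realize off X). realize off X i = Some S}"
    then have i: "off < i" "i \<le> off + card X" "en X (i - off - 1) = S"
      unfolding realize_def by (auto split: if_splits)
    have "i - off - 1 = j"
      using en_bij[OF assms] i j unfolding bij_betw_def inj_on_def by auto
    then show "i \<in> {off + 1 + j}" using i by auto
  next
    fix i assume "i \<in> {off + 1 + j}"
    then show "i \<in> {i \<in> dom (realize off X). realize off X i = Some S}"
      using j unfolding realize_def by auto
  qed
  then show "card {i \<in> dom (realize off X). realize off X i = Some S} = 1" by simp
qed

definition okX :: "'a set set \<Rightarrow> bool" where
  "okX X \<longleftrightarrow> finite X \<and> X \<noteq> {} \<and> {} \<notin> X"

lemma realize_profile: assumes "okX X" shows "is_profile (realize off X)"
proof -
  have "card X > 0" using assms unfolding okX_def by auto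
  then show ?thesis using assms realize_ran[of X off] unfolding is_profile_def okX_def is_ballot_def
    by (auto simp: realize_dom)
qed

lemma each_once_ran: assumes "each_once X A" shows "ran A = X"
proof
  show "ran A \<subseteq> X" using assms unfolding each_once_def by auto
  show "X \<subseteq> ran A"
  proof
    fix S assume "S \<in> X"
    then have "card {i \<in> dom A. A i = Some S} = 1" using assms unfolding each_once_def by auto
    then have "{i \<in> dom A. A i = Some S} \<noteq> {}" by (metis card.empty zero_neq_one)
    then show "S \<in> ran A" unfolding ran_def by auto
  qed
qed

lemma each_once_bij:
  assumes "is_profile A" "each_once X A"
  shows "bij_betw (\<lambda>i. the (A i)) (dom A) X"
proof -
  have r: "ran A = X" using each_once_ran[OF assms(2)] .
  have inj: "inj_on (\<lambda>i. the (A i)) (dom A)"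
  proof (rule inj_onI)
    fix i j assume ij: "i \<in> dom A" "j \<in> dom A" "the (A i) = the (A j)"
    define S where "S = the (A i)"
    have Ai: "A i = Some S" using ij S_def by auto
    have Aj: "A j = Some S" using ij S_def by auto
    have "S \<in> X" using Ai r unfolding ran_def by auto
    then have c: "card {l \<in> dom A. A l = Some S} = 1" using assms(2) unfolding each_once_def by auto
    have "i \<in> {l \<in> dom A. A l = Some S}" "j \<in> {l \<in> dom A. A l = Some S}" using ij Ai Aj by auto
    then show "i = j" using c by (metis card_1_singletonE singletonD)
  qed
  have "(\<lambda>i. the (A i)) ` dom A = ran A" unfolding ran_def dom_def by force
  then show ?thesis using inj r unfolding bij_betw_def by simp
qed

lemma anon_each_once:
  assumes "anonymous f" "is_profile A" "is_profile B" "each_once X A" "each_once X B"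
  shows "f A = f B"
proof -
  define vA where "vA = (\<lambda>i. the (A i))"
  define vB where "vB = (\<lambda>i. the (B i))"
  have bA: "bij_betw vA (dom A) X" using each_once_bij[OF assms(2,4)] vA_def by simp
  have bB: "bij_betw vB (dom B) X" using each_once_bij[OF assms(3,5)] vB_def by simp
  define \<pi> where "\<pi> = (\<lambda>i. inv_into (dom A) vA (vB i))"
  have bp: "bij_betw \<pi> (dom B) (dom A)"
    unfolding \<pi>_def using bij_betw_trans[OF bB bij_betw_inv_into[OF bA]] by (simp add: comp_def)
  have eq: "\<forall>i\<in>dom B. B i = A (\<pi> i)"
  proof
    fix i assume i: "i \<in> dom B"
    have "vB i \<in> X" using bB i unfolding bij_betw_def by auto
    then have pi: "\<pi> i \<in> dom A" "vA (\<pi> i) = vB i"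
      unfolding \<pi>_def using bA by (auto simp: bij_betw_def inv_into_into f_inv_into_f)
    then show "B i = A (\<pi> i)" using i unfolding vA_def vB_def by auto
  qed
  show ?thesis using assms(1) bp eq assms(2,3) unfolding anonymous_def by metis
qed




locale abc =
  fixes f :: "('a::finite) profile \<Rightarrow> 'a set set" and k :: nat
  assumes anon: "anonymous f" and neut: "neutral f" and cons: "consistent f"
    and weff: "weakly_efficient f" and rul: "is_abc_rule k f"
begin

definition F :: "'a set set \<Rightarrow> 'a set set" where "F X = f (realize 0 X)"

lemma F_eq: assumes "is_profile A" "each_once X A" shows "f A = F X"
proof -
  have r: "ran A = X" using each_once_ran[OF assms(2)] .
  have "okX X" unfolding okX_def
  proof (intro conjI)
    show "finite X" by simp
    show "X \<noteq> {}" using assms(1) r unfolding is_profile_def ran_def dom_def by auto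
    show "{} \<notin> X" using assms(1) r unfolding is_profile_def is_ballot_def by auto
  qed
  then show ?thesis unfolding F_def
    using anon_each_once[OF anon assms(1) realize_profile[of X 0] assms(2) realize_each_once] by simp
qed

lemma F_rule: assumes "okX X" shows "F X \<noteq> {}" "F X \<subseteq> committees k"
  using rul realize_profile[OF assms, of 0] unfolding F_def is_abc_rule_def by auto

lemma F_union:
  assumes "okX X" "okX X'" "X \<inter> X' = {}" "F X \<inter> F X' \<noteq> {}"
  shows "F (X \<union> X') = F X \<inter> F X'"
proof -
  define A where "A = realize 0 X"
  define B where "B = realize (card X) X'"
  have fX: "finite X" "finite X'" using assms unfolding okX_def by auto
  have pA: "is_profile A" "each_once X A" using realize_profile[OF assms(1)] realize_each_once[OF fX(1)] A_def by auto
  have pB: "is_profile B" "each_once X' B" using realize_profile[OF assms(2)] realize_each_once[OF fX(2)] B_def by auto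
  have dd: "dom A \<inter> dom B = {}" unfolding A_def B_def realize_dom by auto
  have fA: "f A = F X" using F_eq pA by simp
  have fB: "f B = F X'" using F_eq pB by simp
  have ranA: "ran A = X" "ran B = X'" using pA pB each_once_ran by auto
  have prof: "is_profile (A ++ B)"
    using pA(1) pB(1) dd ran_map_add[OF dd] unfolding is_profile_def by auto
  have eo: "each_once (X \<union> X') (A ++ B)"
    unfolding each_once_def
  proof (intro conjI ballI)
    show "ran (A ++ B) \<subseteq> X \<union> X'" using ran_map_add[OF dd] ranA by auto
    fix S assume S: "S \<in> X \<union> X'"
    show "card {i \<in> dom (A ++ B). (A ++ B) i = Some S} = 1"
    proof (cases "S \<in> X")
      case True
      then have "S \<notin> X'" using assms(3) by auto
      then have "{i \<in> dom (A ++ B). (A ++ B) i = Some S} = {i \<in> dom A. A i = Some S}"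
        using ranA(2) dd unfolding ran_def map_add_def dom_def by (auto split: option.splits)
      then show ?thesis using pA(2) True unfolding each_once_def by auto
    next
      case False
      then have "S \<in> X'" using S by auto
      have "{i \<in> dom (A ++ B). (A ++ B) i = Some S} = {i \<in> dom B. B i = Some S}"
        using ranA(1) False dd unfolding ran_def map_add_def dom_def by (auto split: option.splits)
      then show ?thesis using pB(2) \<open>S \<in> X'\<close> unfolding each_once_def by auto
    qed
  qed
  have "f (A ++ B) = f A \<inter> f B"
    using cons pA(1) pB(1) dd assms(4) fA fB unfolding consistent_def by auto
  then show ?thesis using F_eq[OF prof eo] fA fB by simp
qed

lemma F_neut:
  assumes "okX X" "bij \<tau>"
  shows "F (image \<tau> ` X) = image \<tau> ` F X"
proof -
  define A where "A = realize 0 X"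
  have fX: "finite X" using assms unfolding okX_def by auto
  have pA: "is_profile A" "each_once X A" using realize_profile[OF assms(1)] realize_each_once[OF fX] A_def by auto
  define A' where "A' = (\<lambda>i. map_option (image \<tau>) (A i))"
  have inj: "inj \<tau>" using assms(2) bij_is_inj by auto
  have injI: "\<And>S T. (\<tau> ` S = \<tau> ` T) = (S = T)" using inj by (simp add: inj_image_eq_iff)
  have domA': "dom A' = dom A" unfolding A'_def by auto
  have ranA': "ran A' = image \<tau> ` ran A" unfolding A'_def ran_def by force
  have p': "is_profile A'"
    using pA(1) domA' ranA' unfolding is_profile_def is_ballot_def by auto
  have eo: "each_once (image \<tau> ` X) A'"
    unfolding each_once_def
  proof (intro conjI ballI)
    show "ran A' \<subseteq> image \<tau> ` X" using ranA' each_once_ran[OF pA(2)] by simp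
    fix T assume "T \<in> image \<tau> ` X"
    then obtain S where S: "S \<in> X" "T = \<tau> ` S" by auto
    have "{i \<in> dom A'. A' i = Some T} = {i \<in> dom A. A i = Some S}"
      unfolding A'_def using S injI by (auto simp: dom_def)
    then show "card {i \<in> dom A'. A' i = Some T} = 1" using pA(2) S unfolding each_once_def by auto
  qed
  have "f A' = image \<tau> ` f A" using neut pA(1) assms(2) unfolding neutral_def A'_def by auto
  then show ?thesis using F_eq[OF p' eo] F_eq[OF pA] by simp
qed

lemma F_weak:
  assumes "okX X" "W \<in> F X" "c \<in> W" "\<forall>S\<in>X. c \<notin> S" "c' \<notin> W"
  shows "insert c' (W - {c}) \<in> F X"
proof -
  have fX: "finite X" using assms unfolding okX_def by auto
  show ?thesis using weff realize_profile[OF assms(1), of 0] realize_ran[OF fX, of 0] assms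
    unfolding weakly_efficient_def F_def by blast
qed

lemma F_single: assumes "S \<noteq> {}" shows "f (single S) = F {S}"
proof -
  have "is_profile (single S)" using assms unfolding is_profile_def single_def is_ballot_def by auto
  moreover have "each_once {S} (single S)"
    unfolding each_once_def single_def by auto
  ultimately show ?thesis using F_eq by simp
qed

end



definition tr :: "'a \<Rightarrow> 'a \<Rightarrow> 'a \<Rightarrow> 'a" where
  "tr a b x = (if x = a then b else if x = b then a else x)"

lemma tr_tr[simp]: "tr a b (tr a b x) = x" unfolding tr_def by auto

lemma tr_bij: "bij (tr a b)"
  unfolding bij_def inj_def surj_def by (metis tr_tr)

lemma tr_inj: "inj (tr a b)" by (rule bij_is_inj[OF tr_bij])

lemma tr_sym: "tr a b = tr b a" unfolding tr_def by (rule ext) auto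

lemma tr_in_out: assumes "a \<in> W" "b \<notin> W" shows "tr a b ` W = insert b (W - {a})"
proof (rule set_eqI)
  fix x show "x \<in> tr a b ` W \<longleftrightarrow> x \<in> insert b (W - {a})"
  proof
    assume "x \<in> tr a b ` W" then obtain y where "y \<in> W" "x = tr a b y" by auto
    then show "x \<in> insert b (W - {a})" using assms unfolding tr_def by (auto split: if_splits)
  next
    assume x: "x \<in> insert b (W - {a})"
    have "tr a b x \<in> W" using x assms unfolding tr_def by auto
    then show "x \<in> tr a b ` W" by (metis image_eqI tr_tr)
  qed
qed

lemma tr_mem: "(a \<in> Y \<longleftrightarrow> b \<in> Y) \<Longrightarrow> (tr a b x \<in> Y) = (x \<in> Y)"
  unfolding tr_def by auto

lemma tr_same: assumes "(a \<in> Y \<longleftrightarrow> b \<in> Y)" shows "tr a b ` Y = Y"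
proof (rule set_eqI)
  fix x show "x \<in> tr a b ` Y \<longleftrightarrow> x \<in> Y"
    using tr_mem[OF assms] by (metis image_iff tr_tr)
qed

lemma tr_card: "card (tr a b ` W) = card W"
  by (rule card_image[OF inj_on_subset[OF tr_inj subset_UNIV]])

lemma tr_Int: "(a \<in> H \<longleftrightarrow> b \<in> H) \<Longrightarrow> tr a b ` W \<inter> H = tr a b ` (W \<inter> H)"
  using image_Int[OF tr_inj[of a b], of W H] tr_same[of a H b] by simp

definition PP :: "nat \<Rightarrow> 'a set \<Rightarrow> 'a set \<Rightarrow> 'a set set" where
  "PP r Y Z = {S. card S = r \<and> Y \<subseteq> S \<and> S \<inter> Z = {}}"

lemma PP_img:
  assumes "bij \<tau>"
  shows "image \<tau> ` PP r Y Z = PP r (\<tau> ` Y) (\<tau> ` Z)"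
proof -
  have inj: "inj \<tau>" using assms bij_is_inj by auto
  have key: "\<And>S. S \<in> PP r Y Z \<longleftrightarrow> \<tau> ` S \<in> PP r (\<tau> ` Y) (\<tau> ` Z)"
    unfolding PP_def using inj
    by (auto simp: card_image inj_on_subset image_Int[symmetric] inj_image_subset_iff)
  show ?thesis
  proof
    show "image \<tau> ` PP r Y Z \<subseteq> PP r (\<tau> ` Y) (\<tau> ` Z)" using key by auto
    show "PP r (\<tau> ` Y) (\<tau> ` Z) \<subseteq> image \<tau> ` PP r Y Z"
    proof
      fix T assume T: "T \<in> PP r (\<tau> ` Y) (\<tau> ` Z)"
      define S where "S = inv \<tau> ` T"
      have "\<tau> ` S = T" unfolding S_def using assms by (simp add: image_comp bij_is_surj surj_f_inv_f)
      then show "T \<in> image \<tau> ` PP r Y Z" using key T by auto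
    qed
  qed
qed

lemma PP_ok: fixes Y :: "('a::finite) set" shows "1 \<le> r \<Longrightarrow> PP r Y Z \<noteq> {} \<Longrightarrow> okX (PP r Y Z)"
  unfolding okX_def PP_def by auto

definition closedH :: "'a set \<Rightarrow> 'a set set \<Rightarrow> bool" where
  "closedH H K \<longleftrightarrow> (\<forall>a b W. (a \<in> H \<longleftrightarrow> b \<in> H) \<longrightarrow> W \<in> K \<longrightarrow> tr a b ` W \<in> K)"

lemma orbit:
  fixes K :: "('a::finite) set set"
  assumes cl: "closedH H K"
  shows "W \<in> K \<Longrightarrow> card W' = card W \<Longrightarrow> card (W' \<inter> H) = card (W \<inter> H) \<Longrightarrow> W' \<in> K"
proof (induction "card (W - W')" arbitrary: W rule: less_induct)
  case less
  show ?case
  proof (cases "W - W' = {}")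
    case True
    then have "W \<subseteq> W'" by auto
    then have "W = W'" using less.prems(2) card_subset_eq[of W' W] by simp
    then show ?thesis using less.prems(1) by simp
  next
    case False
    then obtain a where a: "a \<in> W" "a \<notin> W'" by auto
    have "\<exists>b. b \<in> W' \<and> b \<notin> W \<and> (a \<in> H \<longleftrightarrow> b \<in> H)"
    proof (cases "a \<in> H")
      case True
      show ?thesis
      proof (rule ccontr)
        assume "\<not> ?thesis"
        then have "W' \<inter> H \<subseteq> (W \<inter> H) - {a}" using True a by auto
        then have "card (W' \<inter> H) \<le> card ((W \<inter> H) - {a})" by (simp add: card_mono)
        also have "\<dots> < card (W \<inter> H)" using True a by (intro card_Diff1_less) auto
        finally show False using less.prems(3) by simp
      qed
    next
      case False
      have c1: "card (W' - H) = card (W - H)"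
        using less.prems(2,3) by (simp add: card_Diff_subset_Int Int_commute)
      show ?thesis
      proof (rule ccontr)
        assume "\<not> ?thesis"
        then have "W' - H \<subseteq> (W - H) - {a}" using False a by auto
        then have "card (W' - H) \<le> card ((W - H) - {a})" by (simp add: card_mono)
        also have "\<dots> < card (W - H)" using False a by (intro card_Diff1_less) auto
        finally show False using c1 by simp
      qed
    qed
    then obtain b where b: "b \<in> W'" "b \<notin> W" "a \<in> H \<longleftrightarrow> b \<in> H" by blast
    define W2 where "W2 = tr a b ` W"
    have W2: "W2 = insert b (W - {a})" unfolding W2_def using tr_in_out a b by metis
    have W2K: "W2 \<in> K" using cl less.prems(1) b unfolding closedH_def W2_def by blast
    have cW2: "card W2 = card W" unfolding W2_def by (rule tr_card)
    have cH: "card (W2 \<inter> H) = card (W \<inter> H)" unfolding W2_def using tr_Int[OF b(3)] tr_card by metis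
    have "W2 - W' = (W - W') - {a}" using W2 b a by auto
    then have "card (W2 - W') < card (W - W')" using a by (metis DiffI card_Diff1_less finite)
    then show ?thesis using less.hyps[OF _ W2K] less.prems cW2 cH by simp
  qed
qed

definition Omin :: "nat \<Rightarrow> 'a set \<Rightarrow> 'a set set" where
  "Omin k H = {W. card W = k \<and> (W \<subseteq> - H \<or> - H \<subseteq> W)}"

lemma Omin_card:
  fixes W :: "('a::finite) set"
  assumes "W \<in> Omin k H" shows "card (W \<inter> H) = k - card (- H)"
proof -
  have ck: "card W = k" using assms unfolding Omin_def by auto
  show ?thesis
  proof (cases "W \<subseteq> - H")
    case True
    then have "W \<inter> H = {}" by auto
    moreover have "k \<le> card (- H)" using ck True card_mono[of "- H" W] by simp
    ultimately show ?thesis by simp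
  next
    case False
    then have s: "- H \<subseteq> W" using assms unfolding Omin_def by auto
    have "W - H = - H" using s by auto
    then have "card (W - H) = card (- H)" by simp
    moreover have "card (W - H) = card W - card (W \<inter> H)" by (simp add: card_Diff_subset_Int)
    moreover have "card (W \<inter> H) \<le> card W" by (simp add: card_mono)
    ultimately show ?thesis using ck by simp
  qed
qed

lemma Omin_ne:
  assumes "k \<le> card (UNIV :: ('a::finite) set)"
  shows "Omin k (H :: 'a set) \<noteq> {}"
proof (cases "k \<le> card (- H)")
  case True
  then obtain T where "T \<subseteq> - H" "card T = k" by (meson obtain_subset_with_card_n)
  then show ?thesis unfolding Omin_def by auto
next
  case False
  have cu: "card H + card (- H) = card (UNIV :: 'a set)"
    using card_Un_disjoint[of H "- H"] by (simp add: Compl_partition)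
  then have "k - card (- H) \<le> card H" using assms by simp
  then obtain T where T: "T \<subseteq> H" "card T = k - card (- H)" by (meson obtain_subset_with_card_n)
  have "card (- H \<union> T) = card (- H) + card T" using T(1) by (subst card_Un_disjoint) auto
  then have "card (- H \<union> T) = k" using T False by simp
  then show ?thesis unfolding Omin_def by auto
qed

lemma orbit_min:
  fixes K :: "('a::finite) set set"
  assumes ne: "K \<noteq> {}" and sub: "K \<subseteq> committees k" and cl: "closedH H K"
    and ZH: "Z \<subseteq> H" and Zne: "Z \<noteq> {}"
    and we: "\<forall>W c c'. W \<in> K \<longrightarrow> c \<in> Z \<longrightarrow> c \<in> W \<longrightarrow> c' \<notin> W \<longrightarrow> insert c' (W - {c}) \<in> K"
  shows "Omin k H \<subseteq> K"
proof
  fix W1 assume W1: "W1 \<in> Omin k H"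
  obtain Wx where "Wx \<in> K" using ne by auto
  then obtain W0 where W0: "W0 \<in> K" "\<forall>W. W \<in> K \<longrightarrow> card (W0 \<inter> H) \<le> card (W \<inter> H)"
    using ex_has_least_nat[of "\<lambda>W. W \<in> K" Wx "\<lambda>W. card (W \<inter> H)"] by blast
  have "W0 \<subseteq> - H \<or> - H \<subseteq> W0"
  proof (rule ccontr)
    assume "\<not> (W0 \<subseteq> - H \<or> - H \<subseteq> W0)"
    then obtain h c where hc: "h \<in> W0" "h \<in> H" "c \<notin> H" "c \<notin> W0" by auto
    obtain z where z: "z \<in> Z" using Zne by auto
    have zH: "z \<in> H" using z ZH by auto
    define W2 where "W2 = tr h z ` W0"
    have W2K: "W2 \<in> K" using cl W0(1) hc zH unfolding closedH_def W2_def by blast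
    have zW2: "z \<in> W2" unfolding W2_def using hc(1) by (metis image_eqI tr_def)
    have cW2: "c \<notin> W2"
    proof
      assume "c \<in> W2"
      then obtain x where x: "x \<in> W0" "c = tr h z x" unfolding W2_def by auto
      then have "x = c" using hc zH unfolding tr_def by (auto split: if_splits)
      then show False using x hc by simp
    qed
    have cH: "card (W2 \<inter> H) = card (W0 \<inter> H)" unfolding W2_def
      using tr_Int[of h H z W0] hc zH tr_card by metis
    define W3 where "W3 = insert c (W2 - {z})"
    have W3K: "W3 \<in> K" using we W2K z zW2 cW2 unfolding W3_def by blast
    have "W3 \<inter> H = (W2 \<inter> H) - {z}" unfolding W3_def using hc by auto
    then have "card (W3 \<inter> H) < card (W2 \<inter> H)" using zW2 zH by (metis IntI card_Diff1_less finite)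
    then show False using W0(2) W3K cH by fastforce
  qed
  then have W0O: "W0 \<in> Omin k H" using W0(1) sub unfolding Omin_def committees_def by auto
  show "W1 \<in> K"
    using orbit[OF cl W0(1)] W1 W0O Omin_card[OF W1] Omin_card[OF W0O] unfolding Omin_def by auto
qed




locale abcr = abc f k for f :: "('a::finite) profile \<Rightarrow> 'a set set" and k :: nat +
  fixes r :: nat
  assumes r1: "1 \<le> r" and km: "k < card (UNIV :: 'a set)"
begin

lemma PPok: fixes Y Z :: "'a set" shows "PP r Y Z \<noteq> {} \<Longrightarrow> okX (PP r Y Z)" by (rule PP_ok[OF r1])

lemma F_PP_inv:
  assumes "PP r Y Z \<noteq> {}" "a \<in> Y \<longleftrightarrow> b \<in> Y" "a \<in> Z \<longleftrightarrow> b \<in> Z" "W \<in> F (PP r Y Z)"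
  shows "tr a b ` W \<in> F (PP r Y Z)"
proof -
  have "image (tr a b) ` PP r Y Z = PP r Y Z"
    using PP_img[OF tr_bij, of a b r Y Z] tr_same[OF assms(2)] tr_same[OF assms(3)] by simp
  then have "F (PP r Y Z) = image (tr a b) ` F (PP r Y Z)"
    using F_neut[OF PPok[OF assms(1)] tr_bij[of a b]] by metis
  then show ?thesis using assms(4) by auto
qed

lemma F_union_neutral:
  assumes "okX X" "okX X'" "X \<inter> X' = {}" "F X' = committees k"
  shows "F (X \<union> X') = F X"
proof -
  have "F X \<inter> F X' = F X" using F_rule[OF assms(1)] assms(4) by auto
  then show ?thesis using F_union[OF assms(1,2,3)] F_rule[OF assms(1)] by simp
qed

lemma sym_step:
  assumes IH: "\<And>Y Z. Y \<inter> Z = {} \<Longrightarrow> card Y + card Z = n \<Longrightarrow> PP r Y Z \<noteq> {} \<Longrightarrow> F (PP r Y Z) = committees k"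
    and dj: "Y' \<inter> Z' = {}" and cs: "card Y' + card Z' = Suc n" and ne: "PP r Y' Z' \<noteq> {}"
    and a: "a \<in> Y'" and b: "b \<in> Z'" and W: "W \<in> F (PP r Y' Z')"
  shows "tr a b ` W \<in> F (PP r Y' Z')"
proof -
  define Y where "Y = Y' - {a}"
  define Z where "Z = Z' - {b}"
  define P where "P = PP r Y' Z'"
  define Q where "Q = PP r (insert b Y) (insert a Z)"
  define R1 where "R1 = PP r (insert b Y) Z"
  define R2 where "R2 = PP r Y' Z"
  have aZ: "a \<notin> Z'" and bY: "b \<notin> Y'" using a b dj by auto
  have tY: "tr a b ` Y' = insert b Y" unfolding Y_def using tr_in_out[OF a bY] .
  have tZ: "tr a b ` Z' = insert a Z" unfolding Z_def using tr_in_out[OF b aZ] tr_sym by metis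
  have QP: "Q = image (tr a b) ` P" unfolding Q_def P_def using PP_img[OF tr_bij, of a b r Y' Z'] tY tZ by simp
  have Qne: "Q \<noteq> {}" using QP ne P_def by simp
  have Yeq: "Y' = insert a Y" unfolding Y_def using a by blast
  have Zeq: "Z' = insert b Z" unfolding Z_def using b by blast
  have aY: "a \<notin> Y" "b \<notin> Y" "a \<notin> Z" "b \<notin> Z" "a \<noteq> b" unfolding Y_def Z_def using a b aZ bY by auto
  have un: "P \<union> R1 = Q \<union> R2"
  proof (rule set_eqI)
    fix S
    show "S \<in> P \<union> R1 \<longleftrightarrow> S \<in> Q \<union> R2"
      unfolding P_def Q_def R1_def R2_def PP_def Yeq Zeq using aY
      by (cases "a \<in> S"; cases "b \<in> S") auto
  qed
  have d1: "P \<inter> R1 = {}" unfolding P_def R1_def PP_def using b by auto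
  have d2: "Q \<inter> R2 = {}" unfolding Q_def R2_def PP_def using a by auto
  have R1ne: "R1 \<noteq> {}" using Qne unfolding Q_def R1_def PP_def by auto
  have R2ne: "R2 \<noteq> {}" using ne unfolding P_def R2_def PP_def Z_def by blast
  have cY: "card Y' = Suc (card Y)" unfolding Y_def using a by (metis card_Suc_Diff1 finite)
  have cZ: "card Z' = Suc (card Z)" unfolding Z_def using b by (metis card_Suc_Diff1 finite)
  have bY2: "b \<notin> Y" unfolding Y_def using bY by auto
  have dj1: "insert b Y \<inter> Z = {}" unfolding Y_def Z_def using dj by blast
  have cb: "card (insert b Y) = Suc (card Y)" using bY2 by (metis card_insert_disjoint finite)
  have c1: "card (insert b Y) + card Z = n" using cb cs cY cZ by simp
  have N1: "F R1 = committees k" unfolding R1_def by (rule IH[OF dj1 c1 R1ne[unfolded R1_def]])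
  have dj2: "Y' \<inter> Z = {}" unfolding Z_def using dj by blast
  have c2: "card Y' + card Z = n" using cs cZ by simp
  have N2: "F R2 = committees k" unfolding R2_def by (rule IH[OF dj2 c2 R2ne[unfolded R2_def]])
  have okP: "okX P" using PPok ne P_def by simp
  have okQ: "okX Q" using PPok Qne Q_def by simp
  have okR1: "okX R1" using PPok R1ne R1_def by simp
  have okR2: "okX R2" using PPok R2ne R2_def by simp
  have "F P = F (P \<union> R1)" using F_union_neutral[OF okP okR1 d1 N1] by simp
  also have "\<dots> = F (Q \<union> R2)" using un by simp
  also have "\<dots> = F Q" using F_union_neutral[OF okQ okR2 d2 N2] by simp
  also have "\<dots> = image (tr a b) ` F P" using QP F_neut[OF okP tr_bij] by simp
  finally show ?thesis using W P_def by auto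
qed

lemma closed_PP:
  assumes dj: "Y \<inter> Z = {}" and ne: "PP r Y Z \<noteq> {}"
    and sy: "\<And>a b W. a \<in> Y \<Longrightarrow> b \<in> Z \<Longrightarrow> W \<in> F (PP r Y Z) \<Longrightarrow> tr a b ` W \<in> F (PP r Y Z)"
  shows "closedH (Y \<union> Z) (F (PP r Y Z))"
  unfolding closedH_def
proof (intro allI impI)
  fix a b W assume ab: "(a \<in> Y \<union> Z) = (b \<in> Y \<union> Z)" and W: "W \<in> F (PP r Y Z)"
  show "tr a b ` W \<in> F (PP r Y Z)"
  proof (cases "a \<in> Y \<and> b \<in> Z")
    case True then show ?thesis using sy W by blast
  next
    case n1: False
    show ?thesis
    proof (cases "a \<in> Z \<and> b \<in> Y")
      case True then show ?thesis using sy[of b a W] W tr_sym by metis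
    next
      case False
      then have "a \<in> Y \<longleftrightarrow> b \<in> Y" "a \<in> Z \<longleftrightarrow> b \<in> Z" using n1 ab dj by auto
      then show ?thesis using F_PP_inv ne W by blast
    qed
  qed
qed

lemma min_PP:
  assumes "Z \<noteq> {}" "PP r Y Z \<noteq> {}" "closedH (Y \<union> Z) (F (PP r Y Z))"
  shows "Omin k (Y \<union> Z) \<subseteq> F (PP r Y Z)"
proof (rule orbit_min[OF F_rule(1)[OF PPok[OF assms(2)]] F_rule(2)[OF PPok[OF assms(2)]] assms(3), of Z])
  show "Z \<subseteq> Y \<union> Z" by auto
  show "Z \<noteq> {}" by fact
  show "\<forall>W c c'. W \<in> F (PP r Y Z) \<longrightarrow> c \<in> Z \<longrightarrow> c \<in> W \<longrightarrow> c' \<notin> W \<longrightarrow> insert c' (W - {c}) \<in> F (PP r Y Z)"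
  proof (intro allI impI)
    fix W c c' assume "W \<in> F (PP r Y Z)" "c \<in> Z" "c \<in> W" "c' \<notin> W"
    moreover have "\<forall>S\<in>PP r Y Z. c \<notin> S" using \<open>c \<in> Z\<close> unfolding PP_def by auto
    ultimately show "insert c' (W - {c}) \<in> F (PP r Y Z)" using F_weak[OF PPok[OF assms(2)]] by blast
  qed
qed

end



context abcr
begin

lemma closed_level:
  assumes IH: "\<And>Y Z. Y \<inter> Z = {} \<Longrightarrow> card Y + card Z = n \<Longrightarrow> PP r Y Z \<noteq> {} \<Longrightarrow> F (PP r Y Z) = committees k"
    and dj: "Y \<inter> Z = {}" and cs: "card Y + card Z = Suc n" and ne: "PP r Y Z \<noteq> {}"
  shows "closedH (Y \<union> Z) (F (PP r Y Z))"
  by (rule closed_PP[OF dj ne]) (rule sym_step[OF IH dj cs ne])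

lemma split_step:
  assumes IH: "\<And>Y Z. Y \<inter> Z = {} \<Longrightarrow> card Y + card Z = n \<Longrightarrow> PP r Y Z \<noteq> {} \<Longrightarrow> F (PP r Y Z) = committees k"
    and dj: "Y0 \<inter> Z0 = {}" and cs: "card Y0 + card Z0 = n" and Z0: "Z0 \<noteq> {}"
    and v: "v \<notin> Y0" "v \<notin> Z0"
  shows "(PP r (insert v Y0) Z0 \<noteq> {} \<longrightarrow> F (PP r (insert v Y0) Z0) = committees k) \<and>
         (PP r Y0 (insert v Z0) \<noteq> {} \<longrightarrow> F (PP r Y0 (insert v Z0)) = committees k)"
proof -
  define X0 where "X0 = PP r Y0 Z0"
  define X1 where "X1 = PP r (insert v Y0) Z0"
  define X2 where "X2 = PP r Y0 (insert v Z0)"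
  have un: "X0 = X1 \<union> X2" unfolding X0_def X1_def X2_def PP_def by auto
  have d: "X1 \<inter> X2 = {}" unfolding X1_def X2_def PP_def by auto
  have dj1: "insert v Y0 \<inter> Z0 = {}" using dj v by auto
  have dj2: "Y0 \<inter> insert v Z0 = {}" using dj v by auto
  have cs1: "card (insert v Y0) + card Z0 = Suc n" using cs v by (metis add_Suc card_insert_disjoint finite)
  have cs2: "card Y0 + card (insert v Z0) = Suc n" using cs v by (metis add_Suc_right card_insert_disjoint finite)
  define H where "H = insert v (Y0 \<union> Z0)"
  have H1: "insert v Y0 \<union> Z0 = H" unfolding H_def by auto
  have H2: "Y0 \<union> insert v Z0 = H" unfolding H_def by auto
  have O1: "X1 \<noteq> {} \<Longrightarrow> Omin k H \<subseteq> F X1"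
    unfolding X1_def using min_PP[OF Z0 _ closed_level[OF IH dj1 cs1]] H1 by metis
  have O2: "X2 \<noteq> {} \<Longrightarrow> Omin k H \<subseteq> F X2"
    unfolding X2_def using min_PP[OF _ _ closed_level[OF IH dj2 cs2]] H2 by blast
  have One: "Omin k H \<noteq> {}" by (rule Omin_ne) (use km in simp)
  have sub1: "X1 \<noteq> {} \<Longrightarrow> F X1 \<subseteq> committees k" unfolding X1_def using F_rule(2)[OF PPok] by blast
  have sub2: "X2 \<noteq> {} \<Longrightarrow> F X2 \<subseteq> committees k" unfolding X2_def using F_rule(2)[OF PPok] by blast
  have N0: "X0 \<noteq> {} \<Longrightarrow> F X0 = committees k" unfolding X0_def using IH[OF dj cs] by blast
  show ?thesis
  proof (cases "X1 = {}")
    case True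
    then show ?thesis using N0 un X1_def X2_def by auto
  next
    case n1: False
    show ?thesis
    proof (cases "X2 = {}")
      case True
      then show ?thesis using N0 un X1_def X2_def by auto
    next
      case n2: False
      have "F X1 \<inter> F X2 \<noteq> {}" using O1[OF n1] O2[OF n2] One by blast
      then have "F X0 = F X1 \<inter> F X2" using F_union[OF _ _ d] PPok n1 n2 un X1_def X2_def by metis
      then have "F X1 = committees k \<and> F X2 = committees k"
        using N0 un n1 sub1 sub2 n2 by blast
      then show ?thesis using X1_def X2_def by simp
    qed
  qed
qed

lemma zne_step:
  assumes IH: "\<And>Y Z. Y \<inter> Z = {} \<Longrightarrow> card Y + card Z = n \<Longrightarrow> PP r Y Z \<noteq> {} \<Longrightarrow> F (PP r Y Z) = committees k"
    and n1: "1 \<le> n"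
    and dj: "Y \<inter> Z = {}" and cs: "card Y + card Z = Suc n" and Z: "Z \<noteq> {}" and ne: "PP r Y Z \<noteq> {}"
  shows "F (PP r Y Z) = committees k"
proof (cases "Y = {}")
  case False
  then obtain y where y: "y \<in> Y" by auto
  have e: "insert y (Y - {y}) = Y" using y by auto
  have cs0: "card (Y - {y}) + card Z = n" using cs y by (metis add_Suc card_Suc_Diff1 finite old.nat.inject)
  show ?thesis
    using split_step[OF IH _ cs0 Z, of y] dj y ne e by auto
next
  case True
  then have cZ: "card Z = Suc n" using cs by simp
  obtain u where u: "u \<in> Z" using Z by auto
  have cs0: "card {} + card (Z - {u}) = n" using cZ u by (metis add_0 card.empty card_Suc_Diff1 finite old.nat.inject)
  have Zu: "Z - {u} \<noteq> {}"
  proof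
    assume "Z - {u} = {}" then have "n = 0" using cs0 by (metis add_0 card.empty)
    then show False using n1 by simp
  qed
  have e: "insert u (Z - {u}) = Z" using u by auto
  show ?thesis
    using split_step[OF IH _ cs0 Zu, of u] True ne e by auto
qed

lemma zempty_step:
  assumes IH: "\<And>Y Z. Y \<inter> Z = {} \<Longrightarrow> card Y + card Z = n \<Longrightarrow> PP r Y Z \<noteq> {} \<Longrightarrow> F (PP r Y Z) = committees k"
    and n1: "1 \<le> n"
    and cs: "card Y = Suc n" and ne: "PP r Y {} \<noteq> {}"
  shows "F (PP r Y {}) = committees k"
proof -
  obtain u where u: "u \<in> Y" using cs by (metis card.empty ex_in_conv nat.distinct(1))
  define X0 where "X0 = PP r (Y - {u}) {}"
  define X2 where "X2 = PP r (Y - {u}) {u}"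
  have un: "X0 = PP r Y {} \<union> X2" unfolding X0_def X2_def PP_def using u by auto
  have d: "PP r Y {} \<inter> X2 = {}" unfolding X2_def PP_def using u by auto
  have cs0: "card (Y - {u}) + card ({}::'a set) = n" using cs u by (metis add_0_right card.empty card_Suc_Diff1 finite old.nat.inject)
  have X0ne: "X0 \<noteq> {}" using un ne by auto
  have N0: "F X0 = committees k" unfolding X0_def using IH[OF _ cs0] X0ne X0_def by auto
  show ?thesis
  proof (cases "X2 = {}")
    case True
    then show ?thesis using N0 un by simp
  next
    case False
    have cs2: "card (Y - {u}) + card {u} = Suc n" using cs0 by simp
    have N2: "F X2 = committees k" unfolding X2_def
      by (rule zne_step[OF IH n1 _ cs2]) (use False X2_def in auto)
    have "F X0 = F (PP r Y {})"
      using F_union_neutral[OF PPok[OF ne] _ d N2] PPok False X2_def un by metis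
    then show ?thesis using N0 by simp
  qed
qed

lemma all_neutral:
  assumes base: "\<And>x. PP r {x} {} \<noteq> {} \<Longrightarrow> F (PP r {x} {}) = committees k"
    "\<And>x. PP r {} {x} \<noteq> {} \<Longrightarrow> F (PP r {} {x}) = committees k"
  shows "1 \<le> n \<Longrightarrow> Y \<inter> Z = {} \<Longrightarrow> card Y + card Z = n \<Longrightarrow> PP r Y Z \<noteq> {} \<Longrightarrow> F (PP r Y Z) = committees k"
proof (induction n arbitrary: Y Z rule: nat_induct_at_least)
  case base
  then have "(card Y = 1 \<and> card Z = 0) \<or> (card Y = 0 \<and> card Z = 1)" by arith
  then have "(\<exists>x. Y = {x} \<and> Z = {}) \<or> (\<exists>x. Y = {} \<and> Z = {x})"
  proof (elim disjE conjE)
    assume "card Y = 1" "card Z = 0"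
    then show ?thesis by (simp add: card_1_singleton_iff)
  next
    assume "card Y = 0" "card Z = 1"
    then show ?thesis by (simp add: card_1_singleton_iff)
  qed
  then show ?case using base.prems assms by blast
next
  case (Suc n)
  have IH: "\<And>Y Z. Y \<inter> Z = {} \<Longrightarrow> card Y + card Z = n \<Longrightarrow> PP r Y Z \<noteq> {} \<Longrightarrow> F (PP r Y Z) = committees k"
    using Suc.IH by blast
  show ?case
  proof (cases "Z = {}")
    case True
    then show ?thesis using zempty_step[OF IH Suc.hyps] Suc.prems by simp
  next
    case False
    then show ?thesis using zne_step[OF IH Suc.hyps] Suc.prems by blast
  qed
qed

end



lemma committees_img:
  fixes \<tau> :: "'a \<Rightarrow> 'a"
  assumes "bij \<tau>" shows "image \<tau> ` (committees k :: 'a set set) = committees k"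
proof
  have inj: "inj \<tau>" by (rule bij_is_inj[OF assms])
  show "image \<tau> ` committees k \<subseteq> committees k"
  proof
    fix W' assume "W' \<in> image \<tau> ` committees k"
    then obtain W where W: "W \<in> committees k" "W' = \<tau> ` W" by blast
    then show "W' \<in> committees k"
      using card_image[OF inj_on_subset[OF inj subset_UNIV], of W] unfolding committees_def by simp
  qed
  show "committees k \<subseteq> image \<tau> ` committees k"
  proof
    fix W :: "'a set" assume W: "W \<in> committees k"
    have inj2: "inj (inv \<tau>)" by (rule bij_is_inj[OF bij_imp_bij_inv[OF assms]])
    have e: "\<tau> ` (inv \<tau> ` W) = W" unfolding image_image using surj_f_inv_f[OF bij_is_surj[OF assms]] by simp
    have "card (inv \<tau> ` W) = k" using W card_image[OF inj_on_subset[OF inj2 subset_UNIV]] unfolding committees_def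
      by simp
    then have "inv \<tau> ` W \<in> committees k" unfolding committees_def by simp
    then show "W \<in> image \<tau> ` committees k" using rev_image_eqI[of "inv \<tau> ` W" "committees k" W "image \<tau>"] e by simp
  qed
qed

context abcr
begin

lemma full_sym:
  assumes ne: "PP r ({}::'a set) {} \<noteq> {}" shows "F (PP r ({}::'a set) {}) = committees k"
proof
  show "F (PP r ({}::'a set) {}) \<subseteq> committees k" using F_rule(2)[OF PPok[OF ne]] .
  have cl: "closedH {} (F (PP r ({}::'a set) {}))"
    unfolding closedH_def
  proof (intro allI impI)
    fix a b W assume "W \<in> F (PP r ({}::'a set) {})"
    then show "tr a b ` W \<in> F (PP r ({}::'a set) {})" by (rule F_PP_inv[OF ne, rotated 2]) auto
  qed
  obtain W0 where W0: "W0 \<in> F (PP r ({}::'a set) {})" using F_rule(1)[OF PPok[OF ne]] by auto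
  have cW0: "card W0 = k" using W0 F_rule(2)[OF PPok[OF ne]] unfolding committees_def by auto
  show "committees k \<subseteq> F (PP r ({}::'a set) {})"
  proof
    fix W :: "'a set" assume "W \<in> committees k"
    then have "card W = card W0" using cW0 unfolding committees_def by simp
    then show "W \<in> F (PP r ({}::'a set) {})" using orbit[OF cl W0] by simp
  qed
qed

lemma orb1:
  assumes ne: "PP r Y Z \<noteq> {}" and YZ: "Y \<union> Z = {x}" and W: "W \<in> F (PP r Y Z)"
    and W': "W' \<in> committees k" and xx: "x \<in> W \<longleftrightarrow> x \<in> W'"
  shows "W' \<in> F (PP r Y Z)"
proof -
  have sY: "Y \<subseteq> {x}" and sZ: "Z \<subseteq> {x}" using YZ by auto
  have cl: "closedH {x} (F (PP r Y Z))"
    unfolding closedH_def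
  proof (intro allI impI)
    fix a b W assume ab: "(a \<in> {x}) = (b \<in> {x})" and Wi: "W \<in> F (PP r Y Z)"
    have e: "a = x \<longleftrightarrow> b = x" using ab by simp
    have "a \<in> Y \<longleftrightarrow> b \<in> Y" using e sY by (cases "a = x") auto
    moreover have "a \<in> Z \<longleftrightarrow> b \<in> Z" using e sZ by (cases "a = x") auto
    ultimately show "tr a b ` W \<in> F (PP r Y Z)" using F_PP_inv[OF ne _ _ Wi] by simp
  qed
  have c: "card W = k" using W F_rule(2)[OF PPok[OF ne]] unfolding committees_def by auto
  have c': "card W' = k" using W' unfolding committees_def by auto
  have i1: "W' \<inter> {x} = (if x \<in> W' then {x} else {})" and i2: "W \<inter> {x} = (if x \<in> W then {x} else {})" by auto
  have "card (W' \<inter> {x}) = card (W \<inter> {x})" unfolding i1 i2 using xx by simp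
  then show ?thesis using orbit[OF cl W, of W'] c c' by simp
qed

lemma main_F:
  assumes hyp: "card S0 = r" "F {S0} \<noteq> committees k" and rm: "r \<le> card (UNIV :: 'a set)"
  shows "F (PP r {x} {}) = {W \<in> committees k. x \<in> W} \<and> F (PP r {} {x}) = {W \<in> committees k. x \<notin> W}"
proof (cases "r = card (UNIV :: 'a set)")
  case True
  have S0U: "S0 = UNIV" using card_eq_UNIV_imp_eq_UNIV[OF finite_UNIV] hyp(1) True by simp
  have PU: "PP r ({}::'a set) {} = {UNIV}"
  proof (rule set_eqI)
    fix S :: "'a set"
    show "S \<in> PP r {} {} \<longleftrightarrow> S \<in> {UNIV}"
      unfolding PP_def using True card_eq_UNIV_imp_eq_UNIV[OF finite_UNIV, of S] by auto
  qed
  have "F {S0} = committees k" using full_sym[of] PU S0U by simp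
  then show ?thesis using hyp by simp
next
  case False
  then have rm': "r < card (UNIV :: 'a set)" using rm by simp
  have cx: "card (- {x}) = card (UNIV :: 'a set) - 1"
  proof -
    have "- {x} = UNIV - {x}" by auto
    then show ?thesis by (simp add: card_Diff_singleton)
  qed
  have le1: "r - 1 \<le> card (- {x})" using cx rm by simp
  obtain T1 where T1: "T1 \<subseteq> - {x}" "card T1 = r - 1" using obtain_subset_with_card_n[OF le1] by blast
  have xT1: "x \<notin> T1" using T1 by auto
  have "card (insert x T1) = Suc (r - 1)" using xT1 T1(2) by (simp add: card_insert_disjoint)
  then have cT1: "card (insert x T1) = r" using r1 by simp
  have neA: "PP r {x} {} \<noteq> {}"
  proof -
    have "insert x T1 \<in> PP r {x} {}" unfolding PP_def using cT1 by simp
    then show ?thesis by blast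
  qed
  have le2: "r \<le> card (- {x})" using cx rm' by simp
  obtain T2 where T2: "T2 \<subseteq> - {x}" "card T2 = r" using obtain_subset_with_card_n[OF le2] by blast
  have neB: "PP r {} {x} \<noteq> {}"
  proof -
    have "T2 \<in> PP r {} {x}" unfolding PP_def using T2 by auto
    then show ?thesis by blast
  qed
  define a where "a = F (PP r {x} {})"
  define b where "b = F (PP r {} {x})"
  have okA: "okX (PP r {x} {})" using PPok neA by simp
  have okB: "okX (PP r {} {x})" using PPok neB by simp
  have suba: "a \<subseteq> committees k" "a \<noteq> {}" using F_rule[OF okA] a_def by auto
  have subb: "b \<subseteq> committees k" "b \<noteq> {}" using F_rule[OF okB] b_def by auto
  have oa: "W' \<in> a" if "W \<in> a" "W' \<in> committees k" "x \<in> W \<longleftrightarrow> x \<in> W'" for W W'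
    using orb1[OF neA _ that(1)[unfolded a_def] that(2) that(3)] unfolding a_def by simp
  have ob: "W' \<in> b" if "W \<in> b" "W' \<in> committees k" "x \<in> W \<longleftrightarrow> x \<in> W'" for W W'
    using orb1[OF neB _ that(1)[unfolded b_def] that(2) that(3)] unfolding b_def by simp
  have un: "PP r ({}::'a set) {} = PP r {x} {} \<union> PP r {} {x}" unfolding PP_def by auto
  have dj: "PP r {x} {} \<inter> PP r {} {x} = {}" unfolding PP_def by auto
  have fullne: "PP r ({}::'a set) {} \<noteq> {}" using un neA by auto
  show ?thesis
  proof (cases "a \<inter> b = {}")
    case False
    then have "F (PP r ({}::'a set) {}) = a \<inter> b" using F_union[OF okA okB dj] un a_def b_def by simp
    then have ab: "a = committees k" "b = committees k" using full_sym[OF fullne] suba subb by auto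
    have allA: "F (PP r {y} {}) = committees k" if "PP r {y} {} \<noteq> {}" for y
    proof -
      have e: "image (tr x y) ` PP r {x} {} = PP r {y} {}"
        using PP_img[OF tr_bij, of x y r "{x}" "{}"] by (simp add: tr_def)
      have "F (PP r {y} {}) = image (tr x y) ` a" using F_neut[OF okA tr_bij[of x y]] e a_def by simp
      then show ?thesis using ab(1) committees_img[OF tr_bij[of x y]] by simp
    qed
    have allB: "F (PP r {} {y}) = committees k" if "PP r {} {y} \<noteq> {}" for y
    proof -
      have e: "image (tr x y) ` PP r {} {x} = PP r {} {y}"
        using PP_img[OF tr_bij, of x y r "{}" "{x}"] by (simp add: tr_def)
      have "F (PP r {} {y}) = image (tr x y) ` b" using F_neut[OF okB tr_bij[of x y]] e b_def by simp
      then show ?thesis using ab(2) committees_img[OF tr_bij[of x y]] by simp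
    qed
    have S0eq: "PP r S0 (- S0) = {S0}"
    proof (rule set_eqI)
      fix S :: "'a set"
      show "S \<in> PP r S0 (- S0) \<longleftrightarrow> S \<in> {S0}"
      proof
        assume "S \<in> PP r S0 (- S0)"
        then have "S0 \<subseteq> S" "S \<subseteq> S0" unfolding PP_def by auto
        then show "S \<in> {S0}" by auto
      next
        assume "S \<in> {S0}" then show "S \<in> PP r S0 (- S0)" unfolding PP_def using hyp(1) by auto
      qed
    qed
    have cS: "card S0 + card (- S0) = card (UNIV :: 'a set)"
      using card_Un_disjoint[of S0 "- S0"] by (simp add: Compl_partition)
    have one: "1 \<le> card (UNIV :: 'a set)" using km by simp
    have dS: "S0 \<inter> - S0 = {}" by auto
    have neS: "PP r S0 (- S0) \<noteq> {}" using S0eq by simp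
    have "F (PP r S0 (- S0)) = committees k"
      by (rule all_neutral[OF allA allB one dS cS neS])
    then show ?thesis using hyp S0eq by simp
  next
    case True
    obtain Wb where Wb: "Wb \<in> b" using subb by auto
    have cWb: "card Wb = k" using Wb subb unfolding committees_def by auto
    have "\<exists>W. W \<in> b \<and> x \<notin> W"
    proof (cases "x \<in> Wb")
      case False then show ?thesis using Wb by blast
    next
      case True
      have "Wb \<noteq> UNIV" using cWb km by auto
      then obtain c where c: "c \<notin> Wb" by auto
      have nx: "\<forall>S\<in>PP r {} {x}. x \<notin> S" unfolding PP_def by auto
      have "insert c (Wb - {x}) \<in> b" using F_weak[OF okB _ True nx c] Wb b_def by simp
      moreover have "x \<notin> insert c (Wb - {x})" using True c by auto
      ultimately show ?thesis by blast
    qed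
    then obtain Wn where Wn: "Wn \<in> b" "x \<notin> Wn" by blast
    have bn: "{W \<in> committees k. x \<notin> W} \<subseteq> b"
    proof
      fix W assume "W \<in> {W \<in> committees k. x \<notin> W}"
      then show "W \<in> b" using ob[OF Wn(1)] Wn(2) by blast
    qed
    have aeq: "a = {W \<in> committees k. x \<in> W}"
    proof
      show "a \<subseteq> {W \<in> committees k. x \<in> W}" using bn True suba by blast
      obtain Wa where Wa: "Wa \<in> a" using suba by auto
      have "x \<in> Wa" using Wa bn True suba by blast
      then show "{W \<in> committees k. x \<in> W} \<subseteq> a" using oa[OF Wa] by blast
    qed
    have beq: "b = {W \<in> committees k. x \<notin> W}"
    proof
      show "b \<subseteq> {W \<in> committees k. x \<notin> W}" using aeq True subb by blast
      show "{W \<in> committees k. x \<notin> W} \<subseteq> b" by (rule bn)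
    qed
    show ?thesis using aeq beq a_def b_def by simp
  qed
qed

end

theorem mainTheorem13:
  fixes f :: "('a::finite) profile \<Rightarrow> 'a set set" and k :: nat
  assumes "card (UNIV :: 'a set) \<ge> 2" and "1 \<le> k" and "k < card (UNIV :: 'a set)"
    and "is_abc_rule k f"
    and "non_imposing k f" and "anonymous f" and "neutral f" and "consistent f"
    and "continuous_rule f" and "choice_set_convex k f" and "weakly_efficient f"
    and "1 \<le> r" and "r \<le> card (UNIV :: 'a set)"
    and "\<exists>S. is_ballot S \<and> card S = r \<and> f (single S) \<noteq> committees k"
  shows "(\<forall>A. is_profile A \<and> each_once (ballots_with x r) A
            \<longrightarrow> f A = {W \<in> committees k. x \<in> W})
       \<and> (\<forall>A. is_profile A \<and> each_once (ballots_without x r) A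
            \<longrightarrow> f A = {W \<in> committees k. x \<notin> W})"
proof -
  interpret I: abcr f k r
    using assms unfolding abcr_def abc_def abcr_axioms_def by blast
  obtain S where S: "is_ballot S" "card S = r" "f (single S) \<noteq> committees k" using assms(14) by blast
  have FS: "I.F {S} \<noteq> committees k" using I.F_single[of S] S unfolding is_ballot_def by simp
  have M: "I.F (PP r {x} {}) = {W \<in> committees k. x \<in> W} \<and> I.F (PP r {} {x}) = {W \<in> committees k. x \<notin> W}"
    by (rule I.main_F[OF S(2) FS assms(13)])
  have bw: "ballots_with x r = PP r {x} {}"
    unfolding ballots_with_def PP_def is_ballot_def using assms(12) by auto
  have bwo: "ballots_without x r = PP r {} {x}"
    unfolding ballots_without_def PP_def is_ballot_def using assms(12) by auto
  show ?thesis
  proof (intro conjI allI impI)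
    fix A assume "is_profile A \<and> each_once (ballots_with x r) A"
    then show "f A = {W \<in> committees k. x \<in> W}" using I.F_eq[of A "ballots_with x r"] M bw by simp
  next
    fix A assume "is_profile A \<and> each_once (ballots_without x r) A"
    then show "f A = {W \<in> committees k. x \<notin> W}" using I.F_eq[of A "ballots_without x r"] M bwo by simp
  qed
qed

end
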